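(* Let $n,m$ be positive integers, let $\mathbf{A}_c\in\mathbb{Z}^{m\times 2n}$ and $\mathbf{b}_c\in\mathbb{Z}^{m}$, and let $c[\bar x,\bar x']$ be the linear constraint $\mathbf{A}_c\langle \mathbf{x},\mathbf{x}'\rangle\ge \mathbf{b}_c$ in the $2n$ variables $\bar x=(x_1,\dots,x_n)$, $\bar x'=(x'_1,\dots,x'_n)$. Assume $c$ is satisfiable over $\mathbb{Q}_+^{2n}$. Consider the binary $\mathrm{CLP}(\mathbb{Q}_+)$ clause $C$: $p(\bar x)\mathrel{:-} c[\bar x,\bar x'],\,p(\bar x')$, where $p$ is an $n$-ary predicate. Define $$\mathrm{plrf}(C)=\Bigl\{\boldsymbol\mu\in\mathbb{Q}_+^n \;\Bigm|\; \forall \bar x,\bar x'\in\mathbb{Q}_+^n:\ c[\bar x,\bar x']\implies \sum_{i=1}^n\mu_i x_i-\sum_{i=1}^n \mu_i x'_i\ge 1\Bigr\}$$ and let $\mathrm{svg}(C)$ be the set of all $\boldsymbol\mu\in\mathbb{Q}_+^n$ for which there exists $\mathbf{y}\in\mathbb{Q}^m$ such that $\langle\mathbf{y},\boldsymbol\mu\rangle$ satisfies the system $$\begin{pmatrix}\mathbf{A}_c^{\mathrm T} & \begin{matrix}-\mathbf{I}_n\\ \mathbf{I}_n\end{matrix}\\ -\mathbf{b}_c^{\mathrm T} & \mathbf{0}\end{pmatrix}\langle\mathbf{y},\boldsymbol\mu\rangle\le\begin{pmatrix}\mathbf{0}\\-1\end{pmatrix},\qquad \langle\mathbf{y},\boldsymbol\mu\rangle\ge\mathbf{0},$$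 i.e. $\mathbf{y}\ge \mathbf 0$, $\mathbf{A}_c^{\mathrm T}\mathbf{y}\le\langle\boldsymbol\mu,-\boldsymbol\mu\rangle$ componentwise, and $\mathbf{b}_c^{\mathrm T}\mathbf{y}\ge 1$. Then $\mathrm{plrf}(C)=\mathrm{svg}(C)$.
   Context: $\mathbb{Q}_+$ denotes the nonnegative rationals. For vectors $\mathbf v\in\mathbb{Q}^a,\mathbf w\in\mathbb{Q}^b$, $\langle\mathbf v,\mathbf w\rangle\in\mathbb{Q}^{a+b}$ denotes their concatenation (as a column vector); vector inequalities are componentwise; $\mathbf{I}_n$ is the $n\times n$ identity matrix and $\mathbf 0$ a zero matrix/vector of appropriate size. The constraint $c[\bar x,\bar x']$ is identified with the vector inequality $\mathbf{A}_c\langle\mathbf x,\mathbf x'\rangle\ge\mathbf b_c$ where $\mathbf x=\langle x_1,\dots,x_n\rangle$, $\mathbf x'=\langle x'_1,\dots,x'_n\rangle$. *)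

theory Defs
  imports "HOL-Analysis.Analysis"
begin

text \<open>Index types: 'n (n variables), 'm (m constraints); the 2n columns of A_c are
  indexed by 'n + 'n, Inl i standing for x_i and Inr i for x'_i.\<close>

definition vcat :: "'a^'n \<Rightarrow> 'a^'k \<Rightarrow> 'a^('n + 'k)" where
  "vcat v w = (\<chi> k. case k of Inl i \<Rightarrow> v $ i | Inr j \<Rightarrow> w $ j)"

definition ratmat :: "int^'c^'r \<Rightarrow> rat^'c^'r" where
  "ratmat A = (\<chi> i j. of_int (A $ i $ j))"

definition ratvec :: "int^'r \<Rightarrow> rat^'r" where
  "ratvec b = (\<chi> i. of_int (b $ i))"

definition vnonneg :: "rat^'k \<Rightarrow> bool" where
  "vnonneg v \<longleftrightarrow> (\<forall>i. 0 \<le> v $ i)"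

definition vle :: "rat^'k \<Rightarrow> rat^'k \<Rightarrow> bool" where
  "vle v w \<longleftrightarrow> (\<forall>i. v $ i \<le> w $ i)"

definition constr :: "int^('n + 'n)^'m \<Rightarrow> int^'m \<Rightarrow> rat^'n \<Rightarrow> rat^'n \<Rightarrow> bool" where
  "constr A b x x' \<longleftrightarrow> vle (ratvec b) (ratmat A *v vcat x x')"

definition plrf :: "int^('n + 'n)^'m \<Rightarrow> int^'m \<Rightarrow> (rat^'n) set" where
  "plrf A b = {\<mu>. vnonneg \<mu> \<and>
     (\<forall>x x'. vnonneg x \<and> vnonneg x' \<and> constr A b x x' \<longrightarrow>
        (\<Sum>i\<in>UNIV. \<mu> $ i * x $ i) - (\<Sum>i\<in>UNIV. \<mu> $ i * x' $ i) \<ge> 1)}"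

definition svg :: "int^('n + 'n)^'m \<Rightarrow> int^'m \<Rightarrow> (rat^'n) set" where
  "svg A b = {\<mu>. vnonneg \<mu> \<and>
     (\<exists>y :: rat^'m. vnonneg y \<and> vle (transpose (ratmat A) *v y) (vcat \<mu> (- \<mu>))
        \<and> (\<Sum>i\<in>UNIV. ratvec b $ i * y $ i) \<ge> 1)}"

end

theory Submission
  imports Defs
begin

definition sat :: "'v set \<Rightarrow> ('v \<Rightarrow> 'a::linordered_field) \<Rightarrow> ('v \<Rightarrow> 'a) \<times> 'a \<Rightarrow> bool" where
  "sat V y c \<longleftrightarrow> snd c \<le> (\<Sum>j\<in>V. fst c j * y j)"

inductive_set cone :: "(('v \<Rightarrow> 'a::linordered_field) \<times> 'a) set \<Rightarrow> (('v \<Rightarrow> 'a) \<times> 'a) set" for S where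
  cone_zero: "((\<lambda>_. 0), 0) \<in> cone S"
| cone_add: "p \<in> S \<Longrightarrow> c \<ge> 0 \<Longrightarrow> q \<in> cone S \<Longrightarrow> ((\<lambda>j. fst q j + c * fst p j), snd q + c * snd p) \<in> cone S"

lemma cone_base: "p \<in> S \<Longrightarrow> p \<in> cone S"
  using cone_add[OF _ _ cone_zero, of p S 1] by (cases p) simp

lemma cone_addc: "q2 \<in> cone S \<Longrightarrow> q1 \<in> cone S \<Longrightarrow> ((\<lambda>j. fst q1 j + fst q2 j), snd q1 + snd q2) \<in> cone S"
proof (induction rule: cone.induct)
  case cone_zero then show ?case by simp
next
  case (cone_add p c q)
  from cone.cone_add[OF cone_add(1,2) cone_add(4)[OF cone_add(5)]] show ?case
    by (simp add: add.assoc)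
qed

lemma cone_scale: "q \<in> cone S \<Longrightarrow> d \<ge> 0 \<Longrightarrow> ((\<lambda>j. d * fst q j), d * snd q) \<in> cone S"
proof (induction rule: cone.induct)
  case cone_zero then show ?case using cone.cone_zero by simp
next
  case (cone_add p c q)
  from cone.cone_add[OF cone_add(1) _ cone_add(4)[OF cone_add(5)], of "d*c"] cone_add show ?case
    by (simp add: algebra_simps)
qed

lemma cone_mono: "q \<in> cone S' \<Longrightarrow> S' \<subseteq> cone S \<Longrightarrow> q \<in> cone S"
proof (induction rule: cone.induct)
  case cone_zero show ?case by (rule cone.cone_zero)
next
  case (cone_add p c q)
  have "p \<in> cone S" using cone_add by auto
  from cone_addc[OF cone_scale[OF this cone_add(2)] cone_add(4)[OF cone_add(5)]] show ?case by simp
qed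

lemma cone_zero_coord: "q \<in> cone S \<Longrightarrow> (\<forall>p\<in>S. fst p x = 0) \<Longrightarrow> fst q x = 0"
  by (induction rule: cone.induct) auto

lemma cone_sat: "q \<in> cone S \<Longrightarrow> (\<forall>p\<in>S. sat V y p) \<Longrightarrow> sat V y q"
proof (induction rule: cone.induct)
  case cone_zero then show ?case by (simp add: sat_def)
next
  case (cone_add p c q)
  have "snd p \<le> (\<Sum>j\<in>V. fst p j * y j)" using cone_add by (auto simp: sat_def)
  then have "c * snd p \<le> c * (\<Sum>j\<in>V. fst p j * y j)" using cone_add(2) by (rule mult_left_mono)
  moreover have "snd q \<le> (\<Sum>j\<in>V. fst q j * y j)" using cone_add by (auto simp: sat_def)
  ultimately show ?case
    by (simp add: sat_def algebra_simps sum.distrib sum_distrib_left)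
qed

lemma between:
  fixes f g :: "_ \<Rightarrow> 'a::linorder"
  assumes "finite A" "finite B" "\<forall>a\<in>A. \<forall>b\<in>B. f a \<le> g b"
  shows "\<exists>t. (\<forall>a\<in>A. f a \<le> t) \<and> (\<forall>b\<in>B. t \<le> g b)"
proof (cases "A = {}")
  case True
  show ?thesis
  proof (cases "B = {}")
    case True with \<open>A = {}\<close> show ?thesis by auto
  next
    case False
    show ?thesis using True False assms by (intro exI[of _ "Min (g ` B)"]) auto
  qed
next
  case False
  show ?thesis using False assms by (intro exI[of _ "Max (f ` A)"]) (auto simp: Max_le_iff)
qed

lemma fm:
  fixes S :: "(('v \<Rightarrow> 'a::linordered_field) \<times> 'a) set"
  assumes "finite V" "finite S" "\<not>(\<exists>y. \<forall>p\<in>S. sat V y p)"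
  shows "\<exists>q\<in>cone S. (\<forall>j\<in>V. fst q j = 0) \<and> snd q > 0"
  using assms
proof (induction V arbitrary: S rule: finite_induct)
  case empty
  then obtain p where p: "p \<in> S" "snd p > 0" by (auto simp: sat_def not_le)
  then show ?case using cone_base[OF p(1)] by auto
next
  case (insert x F)
  define P where "P = {p\<in>S. fst p x > 0}"
  define N where "N = {p\<in>S. fst p x < 0}"
  define Z where "Z = {p\<in>S. fst p x = 0}"
  define comb where "comb = (\<lambda>(p::('v \<Rightarrow> 'a) \<times> 'a, q::('v \<Rightarrow> 'a) \<times> 'a).
     ((\<lambda>j. (- fst q x) * fst p j + fst p x * fst q j), (- fst q x) * snd p + fst p x * snd q))"
  define S' where "S' = Z \<union> comb ` (P \<times> N)"
  have finS': "finite S'" using insert.prems(1) unfolding S'_def Z_def P_def N_def by auto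
  have sub: "S' \<subseteq> cone S"
  proof
    fix r assume "r \<in> S'"
    then consider "r \<in> Z" | p q where "p \<in> P" "q \<in> N" "r = comb (p, q)" unfolding S'_def by auto
    then show "r \<in> cone S"
    proof cases
      case 1 then show ?thesis using cone_base[of r S] unfolding Z_def by blast
    next
      case 2
      have "p \<in> S" "q \<in> S" "- fst q x \<ge> 0" "fst p x \<ge> 0" using 2 unfolding P_def N_def by auto
      from cone_add[OF this(2) this(4) cone_add[OF this(1) this(3) cone_zero]] show ?thesis
        using 2 unfolding comb_def by simp
    qed
  qed
  have zx: "\<forall>r\<in>S'. fst r x = 0" unfolding S'_def Z_def comb_def by (auto simp: algebra_simps)
  have "\<not>(\<exists>y. \<forall>p\<in>S'. sat F y p)"
  proof
    assume "\<exists>y. \<forall>p\<in>S'. sat F y p"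
    then obtain y where y: "\<forall>p\<in>S'. sat F y p" by blast
    define L where "L = (\<lambda>p::('v \<Rightarrow> 'a) \<times> 'a. (snd p - (\<Sum>j\<in>F. fst p j * y j)) / fst p x)"
    have "\<forall>p\<in>P. \<forall>q\<in>N. L p \<le> L q"
    proof (intro ballI)
      fix p q assume pq: "p \<in> P" "q \<in> N"
      then have "sat F y (comb (p,q))" using y unfolding S'_def by auto
      then have "(- fst q x) * snd p + fst p x * snd q \<le>
          (- fst q x) * (\<Sum>j\<in>F. fst p j * y j) + fst p x * (\<Sum>j\<in>F. fst q j * y j)"
        unfolding sat_def comb_def by (simp add: algebra_simps sum.distrib sum_distrib_left sum_subtractf sum_negf)
      moreover have "fst p x > 0" "fst q x < 0" using pq unfolding P_def N_def by auto
      ultimately show "L p \<le> L q" unfolding L_def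
        by (simp add: divide_simps) (simp add: algebra_simps)
    qed
    moreover have "finite P" "finite N" using insert.prems(1) unfolding P_def N_def by auto
    ultimately obtain t where t: "\<forall>p\<in>P. L p \<le> t" "\<forall>q\<in>N. t \<le> L q" using between by metis
    have "\<forall>p\<in>S. sat (insert x F) (y(x := t)) p"
    proof
      fix p assume p: "p \<in> S"
      have eq: "(\<Sum>j\<in>insert x F. fst p j * (y(x := t)) j) = fst p x * t + (\<Sum>j\<in>F. fst p j * y j)"
        using insert.hyps by (simp add: sum.insert) (intro sum.cong, auto)
      consider "fst p x = 0" | "fst p x > 0" | "fst p x < 0" by linarith
      then show "sat (insert x F) (y(x := t)) p"
      proof cases
        case 1
        then have "p \<in> S'" using p unfolding S'_def Z_def by auto
        then show ?thesis using y 1 eq unfolding sat_def by auto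
      next
        case 2
        then have "p \<in> P" using p unfolding P_def by auto
        then have "L p \<le> t" using t by blast
        then show ?thesis using 2 eq unfolding sat_def L_def by (simp add: pos_divide_le_eq algebra_simps)
      next
        case 3
        then have "p \<in> N" using p unfolding N_def by auto
        then have "t \<le> L p" using t by blast
        then show ?thesis using 3 eq unfolding sat_def L_def by (simp add: neg_le_divide_eq algebra_simps)
      qed
    qed
    then show False using insert.prems(2) by blast
  qed
  from insert.IH[OF finS' this] obtain q where q: "q \<in> cone S'" "\<forall>j\<in>F. fst q j = 0" "snd q > 0" by blast
  have "q \<in> cone S" using cone_mono[OF q(1) sub] .
  moreover have "fst q x = 0" using cone_zero_coord[OF q(1) zx] .
  ultimately show ?case using q by auto
qed


lemma mv_nth: "(ratmat A *v w) $ i = (\<Sum>k\<in>UNIV. of_int (A$i$k) * w$k)"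
  by (simp add: matrix_vector_mult_def ratmat_def)

lemma tv_nth: "(transpose (ratmat A) *v y) $ k = (\<Sum>i\<in>UNIV. of_int (A$i$k) * y$i)"
  by (simp add: matrix_vector_mult_def transpose_def ratmat_def mult.commute)

lemma sum_plus_univ: "(\<Sum>k\<in>(UNIV::('a::finite + 'b::finite) set). f k) = (\<Sum>i\<in>UNIV. f (Inl i)) + (\<Sum>i\<in>UNIV. f (Inr i))"
proof -
  have "(\<Sum>k\<in>(UNIV::('a + 'b) set). f k) = (\<Sum>k\<in>UNIV <+> UNIV. f k)" by simp
  also have "\<dots> = (\<Sum>i\<in>UNIV. f (Inl i)) + (\<Sum>i\<in>UNIV. f (Inr i))"
    by (subst sum.Plus) (auto simp: comp_def)
  finally show ?thesis .
qed

lemma cdot: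
  fixes \<mu> x x' :: "rat^'n::finite"
  shows "(\<Sum>k\<in>UNIV. vcat \<mu> (- \<mu>) $ k * vcat x x' $ k) =
   (\<Sum>i\<in>UNIV. \<mu> $ i * x $ i) - (\<Sum>i\<in>UNIV. \<mu> $ i * x' $ i)"
proof -
  have "(\<Sum>i\<in>UNIV. - \<mu>$i * x'$i) = - (\<Sum>i\<in>UNIV. \<mu>$i * x'$i)" by (simp add: sum_negf[symmetric])
  then show ?thesis by (simp add: sum_plus_univ vcat_def)
qed

lemma vcat_split: "vcat (\<chi> i. w $ Inl i) (\<chi> i. w $ Inr i) = w"
  by (simp add: vcat_def vec_eq_iff split: sum.split)

theorem theorem1:
  fixes A :: "int^('n::finite + 'n)^('m::finite)" and b :: "int^'m"
  assumes "\<exists>x x' :: rat^'n. vnonneg x \<and> vnonneg x' \<and> constr A b x x'"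
  shows "plrf A b = svg A b"
proof
  show "svg A b \<subseteq> plrf A b"
  proof
    fix \<mu> assume "\<mu> \<in> svg A b"
    then obtain y :: "rat^'m" where mu: "vnonneg \<mu>" and y: "vnonneg y"
      "vle (transpose (ratmat A) *v y) (vcat \<mu> (- \<mu>))" "(\<Sum>i\<in>UNIV. ratvec b $ i * y $ i) \<ge> 1"
      unfolding svg_def by blast
    have "(\<Sum>i\<in>UNIV. \<mu> $ i * x $ i) - (\<Sum>i\<in>UNIV. \<mu> $ i * x' $ i) \<ge> 1"
      if x: "vnonneg x" "vnonneg x'" "constr A b x x'" for x x' :: "rat^'n"
    proof -
      define w where "w = vcat x x'"
      have w0: "\<forall>k. 0 \<le> w $ k" using x unfolding w_def vcat_def vnonneg_def by (auto split: sum.split)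
      have 1: "1 \<le> (\<Sum>i\<in>UNIV. ratvec b $ i * y $ i)" by fact
      also have "\<dots> \<le> (\<Sum>i\<in>UNIV. y $ i * (\<Sum>k\<in>UNIV. of_int (A$i$k) * w$k))"
      proof (rule sum_mono)
        fix i
        have "ratvec b $ i \<le> (\<Sum>k\<in>UNIV. of_int (A$i$k) * w$k)"
          using x(3) unfolding constr_def vle_def w_def mv_nth by blast
        then show "ratvec b $ i * y $ i \<le> y $ i * (\<Sum>k\<in>UNIV. of_int (A$i$k) * w$k)"
          using y(1) unfolding vnonneg_def by (simp add: mult.commute mult_left_mono)
      qed
      also have "\<dots> = (\<Sum>k\<in>UNIV. (\<Sum>i\<in>UNIV. of_int (A$i$k) * y$i) * w $ k)"
        by (simp add: sum_distrib_left sum_distrib_right mult_ac) (rule sum.swap)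
      also have "\<dots> \<le> (\<Sum>k\<in>UNIV. vcat \<mu> (- \<mu>) $ k * w $ k)"
      proof (rule sum_mono)
        fix k
        have "(\<Sum>i\<in>UNIV. of_int (A$i$k) * y$i) \<le> vcat \<mu> (- \<mu>) $ k"
          using y(2) unfolding vle_def tv_nth by blast
        then show "(\<Sum>i\<in>UNIV. of_int (A$i$k) * y$i) * w $ k \<le> vcat \<mu> (- \<mu>) $ k * w $ k"
          using w0 by (simp add: mult_right_mono)
      qed
      also have "\<dots> = (\<Sum>i\<in>UNIV. \<mu> $ i * x $ i) - (\<Sum>i\<in>UNIV. \<mu> $ i * x' $ i)"
        unfolding w_def by (rule cdot)
      finally show ?thesis .
    qed
    then show "\<mu> \<in> plrf A b" using mu unfolding plrf_def by blast
  qed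
next
  show "plrf A b \<subseteq> svg A b"
  proof
    fix \<mu> assume "\<mu> \<in> plrf A b"
    then have mu: "vnonneg \<mu>" and pl: "\<And>x x'. vnonneg x \<Longrightarrow> vnonneg x' \<Longrightarrow> constr A b x x' \<Longrightarrow>
        (\<Sum>i\<in>UNIV. \<mu> $ i * x $ i) - (\<Sum>i\<in>UNIV. \<mu> $ i * x' $ i) \<ge> 1"
      unfolding plrf_def by blast+
    define Ar where "Ar = (\<lambda>i k. (of_int (A$i$k) :: rat))"
    define br where "br = (\<lambda>i. (of_int (b$i) :: rat))"
    define c where "c = (\<lambda>k. vcat \<mu> (- \<mu>) $ k)"
    have F: "1 \<le> (\<Sum>k\<in>UNIV. c k * W k)"
      if W: "\<forall>k. 0 \<le> W k" "\<forall>i. br i \<le> (\<Sum>k\<in>UNIV. Ar i k * W k)" for W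
    proof -
      define wv where "wv = (\<chi> k. W k)"
      define x where "x = (\<chi> i. wv $ Inl i)"
      define x' where "x' = (\<chi> i. wv $ Inr i)"
      have vc: "vcat x x' = wv" unfolding x_def x'_def by (rule vcat_split)
      have "vnonneg x" "vnonneg x'" using W(1) unfolding x_def x'_def wv_def vnonneg_def by auto
      moreover have "constr A b x x'" unfolding constr_def vle_def vc
        using W(2) by (simp add: mv_nth ratvec_def wv_def Ar_def br_def)
      ultimately have "1 \<le> (\<Sum>i\<in>UNIV. \<mu> $ i * x $ i) - (\<Sum>i\<in>UNIV. \<mu> $ i * x' $ i)" by (rule pl)
      also have "\<dots> = (\<Sum>k\<in>UNIV. c k * W k)" unfolding cdot[symmetric] vc c_def wv_def by simp
      finally show ?thesis .
    qed
    from assms obtain x0 x0' :: "rat^'n" where x0: "vnonneg x0" "vnonneg x0'" "constr A b x0 x0'" by blast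
    define W0 where "W0 = (\<lambda>k. vcat x0 x0' $ k)"
    have W0: "\<forall>k. 0 \<le> W0 k" "\<forall>i. br i \<le> (\<Sum>k\<in>UNIV. Ar i k * W0 k)"
      using x0 unfolding W0_def vnonneg_def vcat_def constr_def vle_def mv_nth
      by (auto split: sum.split simp: ratvec_def Ar_def br_def)
    show "\<mu> \<in> svg A b"
    proof (rule ccontr)
      assume nsvg: "\<mu> \<notin> svg A b"
      define S where "S = (\<lambda>i. ((\<lambda>j. if j = i then 1 else 0), 0::rat)) ` UNIV
         \<union> (\<lambda>k. ((\<lambda>i. - Ar i k), - c k)) ` UNIV \<union> {(br, 1)}"
      have "finite S" unfolding S_def by simp
      moreover have "\<not>(\<exists>y. \<forall>p\<in>S. sat UNIV y p)"
      proof
        assume "\<exists>y. \<forall>p\<in>S. sat UNIV y p"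
        then obtain y where y: "\<forall>p\<in>S. sat UNIV y p" by blast
        define yv where "yv = (\<chi> i. y i)"
        have "vnonneg yv"
        proof -
          { fix i
            have "sat UNIV y ((\<lambda>j. if j = i then 1 else 0), 0)" using y unfolding S_def by blast
            moreover have "(\<Sum>j\<in>UNIV. (if j = i then 1 else 0) * y j) = (\<Sum>j\<in>UNIV. if j = i then y j else 0)"
              by (rule sum.cong) auto
            ultimately have "0 \<le> y i" unfolding sat_def by simp }
          then show ?thesis unfolding vnonneg_def yv_def by simp
        qed
        moreover have "vle (transpose (ratmat A) *v yv) (vcat \<mu> (- \<mu>))"
        proof -
          { fix k
            have "sat UNIV y ((\<lambda>i. - Ar i k), - c k)" using y unfolding S_def by blast
            then have "(\<Sum>i\<in>UNIV. Ar i k * y i) \<le> c k" unfolding sat_def by (simp add: sum_negf) }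
          then show ?thesis unfolding vle_def tv_nth yv_def c_def Ar_def by simp
        qed
        moreover have "(\<Sum>i\<in>UNIV. ratvec b $ i * yv $ i) \<ge> 1"
        proof -
          have "sat UNIV y (br, 1)" using y unfolding S_def by blast
          then show ?thesis unfolding sat_def yv_def ratvec_def br_def by simp
        qed
        ultimately show False using nsvg mu unfolding svg_def by blast
      qed
      ultimately obtain q where q: "q \<in> cone S" "\<forall>j\<in>UNIV. fst q j = 0" "snd q > 0"
        using fm[of UNIV S] by auto
      have inv: "\<exists>z \<kappa>. (\<forall>k. 0 \<le> z k) \<and> 0 \<le> \<kappa> \<and>
          (\<forall>i. \<kappa> * br i - (\<Sum>k\<in>UNIV. Ar i k * z k) \<le> fst q' i) \<and>
          snd q' = \<kappa> - (\<Sum>k\<in>UNIV. c k * z k)" if "q' \<in> cone S" for q'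
        using that
      proof (induction rule: cone.induct)
        case cone_zero
        show ?case by (intro exI[of _ "\<lambda>_. 0"] exI[of _ 0]) simp
      next
        case (cone_add p d q)
        then obtain z \<kappa> where z: "\<forall>k. 0 \<le> z k" "0 \<le> \<kappa>"
          "\<forall>i. \<kappa> * br i - (\<Sum>k\<in>UNIV. Ar i k * z k) \<le> fst q i"
          "snd q = \<kappa> - (\<Sum>k\<in>UNIV. c k * z k)" by blast
        from cone_add(1) consider i0 where "p = ((\<lambda>j. if j = i0 then 1 else 0), 0)"
          | k0 where "p = ((\<lambda>i. - Ar i k0), - c k0)" | "p = (br, 1)"
          unfolding S_def by blast
        then show ?case
        proof cases
          case 1
          show ?thesis
          proof (intro exI[of _ z] exI[of _ \<kappa>] conjI allI)
            fix i
            have "\<kappa> * br i - (\<Sum>k\<in>UNIV. Ar i k * z k) \<le> fst q i" using z by blast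
            also have "\<dots> \<le> fst q i + d * fst p i" using 1 cone_add(2) by simp
            finally show "\<kappa> * br i - (\<Sum>k\<in>UNIV. Ar i k * z k) \<le> fst (\<lambda>j. fst q j + d * fst p j, snd q + d * snd p) i" by simp
          qed (use z 1 in auto)
        next
          case 2
          define z' where "z' = (\<lambda>k. z k + (if k = k0 then d else 0))"
          have sd: "(\<Sum>k\<in>UNIV. f k * z' k) = (\<Sum>k\<in>UNIV. f k * z k) + f k0 * d" for f :: "_ \<Rightarrow> rat"
          proof -
            have "(\<Sum>k\<in>UNIV. f k * (if k = k0 then d else 0)) = (\<Sum>k\<in>UNIV. if k = k0 then f k * d else 0)"
              by (rule sum.cong) auto
            then show ?thesis unfolding z'_def distrib_left sum.distrib by simp
          qed
          show ?thesis
          proof (intro exI[of _ z'] exI[of _ \<kappa>] conjI allI)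
            fix i
            show "\<kappa> * br i - (\<Sum>k\<in>UNIV. Ar i k * z' k) \<le> fst (\<lambda>j. fst q j + d * fst p j, snd q + d * snd p) i"
            proof -
              have e: "(\<Sum>k\<in>UNIV. Ar i k * z' k) = (\<Sum>k\<in>UNIV. Ar i k * z k) + Ar i k0 * d" by (rule sd)
              have "\<kappa> * br i - (\<Sum>k\<in>UNIV. Ar i k * z k) \<le> fst q i" using z(3) by blast
              then show ?thesis using 2 e by (simp add: algebra_simps)
            qed
          next
            fix k show "0 \<le> z' k" using z(1) cone_add(2) unfolding z'_def by simp
          qed (use z 2 in \<open>auto simp: sd algebra_simps\<close>)
        next
          case 3
          show ?thesis
          proof (intro exI[of _ z] exI[of _ "\<kappa> + d"] conjI allI)
            fix i
            show "(\<kappa> + d) * br i - (\<Sum>k\<in>UNIV. Ar i k * z k) \<le> fst (\<lambda>j. fst q j + d * fst p j, snd q + d * snd p) i"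
              using z(3) 3 by (simp add: algebra_simps)
          qed (use z 3 cone_add(2) in \<open>auto simp: algebra_simps\<close>)
        qed
      qed
      from inv[OF q(1)] obtain z \<kappa> where z: "\<forall>k. 0 \<le> z k" "0 \<le> \<kappa>"
          "\<forall>i. \<kappa> * br i - (\<Sum>k\<in>UNIV. Ar i k * z k) \<le> 0"
          "0 < \<kappa> - (\<Sum>k\<in>UNIV. c k * z k)" using q by auto
      show False
      proof (cases "\<kappa> > 0")
        case True
        define W where "W = (\<lambda>k. z k / \<kappa>)"
        have "1 \<le> (\<Sum>k\<in>UNIV. c k * W k)"
        proof (rule F)
          show "\<forall>k. 0 \<le> W k" using z True unfolding W_def by simp
          show "\<forall>i. br i \<le> (\<Sum>k\<in>UNIV. Ar i k * W k)"
          proof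
            fix i
            have "(\<Sum>k\<in>UNIV. Ar i k * W k) = (\<Sum>k\<in>UNIV. Ar i k * z k) / \<kappa>"
              unfolding W_def by (simp add: sum_divide_distrib)
            moreover have "\<kappa> * br i \<le> (\<Sum>k\<in>UNIV. Ar i k * z k)" using z(3) by (simp add: algebra_simps)
            ultimately show "br i \<le> (\<Sum>k\<in>UNIV. Ar i k * W k)" using True by (simp add: pos_le_divide_eq mult.commute)
          qed
        qed
        moreover have "(\<Sum>k\<in>UNIV. c k * W k) = (\<Sum>k\<in>UNIV. c k * z k) / \<kappa>"
          unfolding W_def by (simp add: sum_divide_distrib)
        ultimately show False using z(4) True by (simp add: le_divide_eq)
      next
        case False
        then have k0: "\<kappa> = 0" using z(2) by simp
        define s where "s = (\<Sum>k\<in>UNIV. c k * z k)"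
        define a where "a = (\<Sum>k\<in>UNIV. c k * W0 k)"
        have s: "s < 0" using z(4) k0 unfolding s_def by simp
        define t where "t = (\<bar>a\<bar> + 1) / (- s)"
        have t0: "0 \<le> t" using s unfolding t_def by (intro divide_nonneg_pos) auto
        define W where "W = (\<lambda>k. W0 k + t * z k)"
        have "1 \<le> (\<Sum>k\<in>UNIV. c k * W k)"
        proof (rule F)
          show "\<forall>k. 0 \<le> W k" using z W0 t0 unfolding W_def by simp
          show "\<forall>i. br i \<le> (\<Sum>k\<in>UNIV. Ar i k * W k)"
          proof
            fix i
            have "(\<Sum>k\<in>UNIV. Ar i k * W k) = (\<Sum>k\<in>UNIV. Ar i k * W0 k) + t * (\<Sum>k\<in>UNIV. Ar i k * z k)"
              unfolding W_def by (simp add: algebra_simps sum.distrib sum_distrib_left)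
            moreover have "0 \<le> (\<Sum>k\<in>UNIV. Ar i k * z k)" using z(3) k0 by simp
            ultimately show "br i \<le> (\<Sum>k\<in>UNIV. Ar i k * W k)" using W0 t0 by (simp add: add_increasing2)
          qed
        qed
        moreover have "(\<Sum>k\<in>UNIV. c k * W k) = a + t * s"
          unfolding W_def a_def s_def by (simp add: algebra_simps sum.distrib sum_distrib_left)
        moreover have "t * s = - (\<bar>a\<bar> + 1)" using s unfolding t_def by simp
        ultimately show False by linarith
      qed
    qed
  qed
qed

end
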